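(* Let $n\ge1$ be even and let $\mathcal{D}_{S_1},\mathcal{D}_{S_2}\subseteq\mathcal{D}_{[n]}\setminus\{n\}$ be such that $\mathrm{ICG}(n,\mathcal{D}_{S_1})$ and $\mathrm{ICG}(n,\mathcal{D}_{S_2})$ are isospectral. Then (a) $\sum_{d\in\mathcal{D}_{S_1},\ d\text{ odd}}\phi(n/d)=\sum_{d\in\mathcal{D}_{S_2},\ d\text{ odd}}\phi(n/d)$, and (b) $\sum_{d\in\mathcal{D}_{S_1},\ d\text{ even}}\phi(n/d)=\sum_{d\in\mathcal{D}_{S_2},\ d\text{ even}}\phi(n/d)$.
   Context: Identify $\mathbb{Z}_n$ with $[n]=\{1,\dots,n\}$. For a divisor $d$ of $n$, $G_n(d)=\{j\in[n]:\gcd(j,n)=d\}$; $\mathcal{D}_{[n]}$ is the set of positive divisors of $n$. For $\mathcal{D}\subseteq\mathcal{D}_{[n]}\setminus\{n\}$, $\mathrm{ICG}(n,\mathcal{D})=\mathrm{Cay}(\mathbb{Z}_n,S)$ with $S=\bigcup_{d\in\mathcal{D}}G_n(d)$, and $\mathcal{D}=\mathcal{D}_S$. $\phi$ is Euler's totient function. Isospectral means having the same multiset of adjacency eigenvalues. *)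

theory Defs
  imports "HOL-Number_Theory.Number_Theory" "Jordan_Normal_Form.Char_Poly"
begin

text \<open>Z_n is identified with [n] = {1..n}; G_n(d) = {j in [n]. gcd j n = d}.\<close>
definition G :: "nat \<Rightarrow> nat \<Rightarrow> nat set" where
  "G n d = {j \<in> {1..n}. gcd j n = d}"

definition divisors_of :: "nat \<Rightarrow> nat set" where
  "divisors_of n = {d. d dvd n}"

definition ICG_set :: "nat \<Rightarrow> nat set \<Rightarrow> nat set" where
  "ICG_set n D = (\<Union>d\<in>D. G n d)"

text \<open>Adjacency matrix of the Cayley graph Cay(Z_n, S); vertices are residues
  represented by 0..n-1, and x ~ y iff y - x (mod n) lies in S.\<close>
definition cayley_adj :: "nat \<Rightarrow> nat set \<Rightarrow> complex mat" where
  "cayley_adj n S = mat n n (\<lambda>(x, y). if (\<exists>s\<in>S. (x + s) mod n = y mod n) then 1 else 0)"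

definition ICG_adj :: "nat \<Rightarrow> nat set \<Rightarrow> complex mat" where
  "ICG_adj n D = cayley_adj n (ICG_set n D)"

definition eigenvalue_mset :: "complex mat \<Rightarrow> complex multiset" where
  "eigenvalue_mset A = proots (char_poly A)"

definition isospectral :: "complex mat \<Rightarrow> complex mat \<Rightarrow> bool" where
  "isospectral A B \<longleftrightarrow> eigenvalue_mset A = eigenvalue_mset B"

end

theory Submission imports Defs "HOL-Analysis.Complex_Transcendental" begin

definition w :: "nat \<Rightarrow> complex" where "w n = exp (2 * of_real pi * \<i> / of_nat n)"

lemma w_pow: "w n ^ k = exp (2 * of_real pi * \<i> * of_nat k / of_nat n)"
  unfolding w_def by (simp add: exp_of_nat_mult[symmetric] mult.commute)

lemma w_pow_eq_1: "n \<ge> 1 \<Longrightarrow> w n ^ k = 1 \<longleftrightarrow> n dvd k"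
  using complex_root_unity_eq_1[of n k] by (simp add: w_pow)

lemma w_pow_n: "n \<ge> 1 \<Longrightarrow> w n ^ n = 1"
  by (simp add: w_pow_eq_1)

lemma w_pow_mod: "n \<ge> 1 \<Longrightarrow> w n ^ (k mod n) = w n ^ k"
proof -
  assume n: "n \<ge> 1"
  have "w n ^ k = w n ^ (n * (k div n) + k mod n)" by simp
  also have "\<dots> = (w n ^ n) ^ (k div n) * w n ^ (k mod n)" by (simp only: power_add power_mult)
  finally show ?thesis using w_pow_n[OF n] by simp
qed

lemma w_nz: "w n ^ k \<noteq> 0" unfolding w_def by simp

lemma norm_w: "norm (w n ^ k) = 1"
  unfolding w_pow by (simp add: norm_exp_eq_Re)

lemma w_pow_mult_mod: "n \<ge> 1 \<Longrightarrow> w n ^ ((a mod n) * j) = w n ^ (a * j)"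
  by (metis power_mult w_pow_mod mult.commute)

lemma geo0: assumes "z ^ n = 1" "z \<noteq> (1::complex)" shows "(\<Sum>j<n. z ^ j) = 0"
  using assms by (simp add: geometric_sum)

definition Pm :: "nat \<Rightarrow> complex mat" where "Pm n = Matrix.mat n n (\<lambda>(x,j). w n ^ (x*j))"
definition Qm :: "nat \<Rightarrow> complex mat" where "Qm n = Matrix.mat n n (\<lambda>(j,y). w n ^ (j*(n-y)) / of_nat n)"

lemma PQ: assumes n: "n \<ge> 1" shows "Pm n * Qm n = 1\<^sub>m n"
proof (rule eq_matI)
  fix x y assume x: "x < dim_row (1\<^sub>m n :: complex mat)" and y: "y < dim_col (1\<^sub>m n :: complex mat)"
  hence x: "x < n" and y: "y < n" by auto
  have "(Pm n * Qm n) $$ (x,y) = (\<Sum>j<n. w n ^ (x*j) * (w n ^ (j*(n-y)) / of_nat n))"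
    using x y by (simp add: Pm_def Qm_def scalar_prod_def lessThan_atLeast0)
  also have "\<dots> = (\<Sum>j<n. (w n ^ (x + (n - y))) ^ j) / of_nat n"
  proof -
    have "\<And>j. w n ^ (x*j) * w n ^ (j*(n-y)) = (w n ^ (x + (n - y))) ^ j"
    proof -
      fix j
      have "(w n ^ (x + (n - y))) ^ j = w n ^ ((x + (n - y)) * j)" by (simp only: power_mult)
      also have "\<dots> = w n ^ (x*j + j*(n-y))" by (simp add: add_mult_distrib2 mult.commute)
      finally show "w n ^ (x*j) * w n ^ (j*(n-y)) = (w n ^ (x + (n - y))) ^ j" by (simp add: power_add)
    qed
    thus ?thesis by (simp add: sum_divide_distrib)
  qed
  also have "\<dots> = 1\<^sub>m n $$ (x,y)"
  proof (cases "x = y")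
    case True
    thus ?thesis using x y w_pow_n[OF n] n by simp
  next
    case False
    have nd: "\<not> n dvd (x + (n - y))"
    proof
      assume "n dvd (x + (n - y))"
      then obtain c where c: "x + (n - y) = n * c" by (auto elim: dvdE)
      have "0 < x + (n - y)" "x + (n - y) < 2 * n" using x y by auto
      with c have "c = 1" by (metis One_nat_def less_2_cases_iff mult.commute mult_less_cancel2 mult_0_right not_less_zero zero_less_iff_neq_zero) 
      with c False x y show False by auto
    qed
    have "(w n ^ (x + (n - y))) ^ n = 1"
      by (metis power_mult mult.commute power_one w_pow_n[OF n])
    moreover have "w n ^ (x + (n - y)) \<noteq> 1" using w_pow_eq_1[OF n] nd by blast
    ultimately show ?thesis using geo0 False x y by simp
  qed
  finally show "(Pm n * Qm n) $$ (x,y) = 1\<^sub>m n $$ (x,y)" .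
qed (auto simp: Pm_def Qm_def)

definition eig :: "nat \<Rightarrow> nat set \<Rightarrow> nat \<Rightarrow> complex" where
  "eig n S j = (\<Sum>s\<in>S. w n ^ (j * s))"
definition Bm :: "nat \<Rightarrow> nat set \<Rightarrow> complex mat" where
  "Bm n S = Matrix.mat n n (\<lambda>(i,j). if i = j then eig n S i else 0)"

lemma AP: assumes n: "n \<ge> 1" and S: "S \<subseteq> {1..n}"
  shows "cayley_adj n S * Pm n = Pm n * Bm n S"
proof (rule eq_matI)
  fix x j assume "x < dim_row (Pm n * Bm n S)" "j < dim_col (Pm n * Bm n S)"
  hence x: "x < n" and j: "j < n" by (auto simp: Pm_def Bm_def)
  have fin: "finite S" using S finite_subset by blast
  have inj: "inj_on (\<lambda>s. (x + s) mod n) S"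
  proof
    fix a b assume a: "a \<in> S" and b: "b \<in> S" and e: "(x + a) mod n = (x + b) mod n"
    hence "a mod n = b mod n" using cong_add_lcancel_nat[of x a b n] by (simp add: cong_def)
    with a b S show "a = b"
      by (metis (no_types, lifting) atLeastAtMost_iff le_neq_implies_less mod_less mod_self subsetD
           not_one_le_zero)
  qed
  have T: "{y \<in> {0..<n}. \<exists>s\<in>S. (x + s) mod n = y mod n} = (\<lambda>s. (x + s) mod n) ` S"
    using n by auto
  have "(cayley_adj n S * Pm n) $$ (x,j) =
      (\<Sum>y\<in>{0..<n}. (if \<exists>s\<in>S. (x + s) mod n = y mod n then 1 else 0) * w n ^ (y*j))"
    using x j by (simp add: cayley_adj_def Pm_def scalar_prod_def)
  also have "\<dots> = (\<Sum>y\<in>{0..<n}. if \<exists>s\<in>S. (x + s) mod n = y mod n then w n ^ (y*j) else 0)"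
    by (intro sum.cong) auto
  also have "\<dots> = (\<Sum>y\<in>{y \<in> {0..<n}. \<exists>s\<in>S. (x + s) mod n = y mod n}. w n ^ (y*j))"
    by (rule sum.inter_filter[symmetric]) simp
  also have "\<dots> = (\<Sum>s\<in>S. w n ^ (((x + s) mod n) * j))"
    unfolding T by (simp add: sum.reindex[OF inj])
  also have "\<dots> = (\<Sum>s\<in>S. w n ^ (x*j) * w n ^ (j * s))"
  proof (intro sum.cong refl)
    fix s
    have "w n ^ (((x + s) mod n) * j) = w n ^ ((x + s) * j)" by (rule w_pow_mult_mod[OF n])
    also have "\<dots> = w n ^ (x*j + j * s)" by (simp add: algebra_simps)
    finally show "w n ^ (((x + s) mod n) * j) = w n ^ (x*j) * w n ^ (j * s)" by (simp add: power_add)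
  qed
  also have "\<dots> = w n ^ (x*j) * eig n S j"
    by (simp add: eig_def sum_distrib_left)
  also have "\<dots> = (Pm n * Bm n S) $$ (x,j)"
  proof -
    have "(Pm n * Bm n S) $$ (x,j) = (\<Sum>k\<in>{0..<n}. w n ^ (x*k) * (if k = j then eig n S k else 0))"
      using x j by (simp add: Bm_def Pm_def scalar_prod_def)
    also have "\<dots> = w n ^ (x*j) * eig n S j"
      using j by (simp add: if_distrib cong: if_cong)
    finally show ?thesis by simp
  qed
  finally show "(cayley_adj n S * Pm n) $$ (x,j) = (Pm n * Bm n S) $$ (x,j)" .
qed (auto simp: Pm_def Bm_def cayley_adj_def)

lemma proots_lin: "proots (\<Prod>a\<leftarrow>xs. [:- a, 1:]) = mset (xs :: complex list)"
proof (induction xs)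
  case (Cons a xs)
  have "(\<Prod>a\<leftarrow>xs. [:- a, 1:]) \<noteq> 0" by (auto simp: prod_list_zero_iff)
  moreover have "[:- a, 1:] \<noteq> (0 :: complex poly)" by simp
  ultimately have "proots ([:- a, 1:] * (\<Prod>a\<leftarrow>xs. [:- a, 1:])) = proots [:- a, 1:] + proots (\<Prod>a\<leftarrow>xs. [:- a, 1:])"
    by (intro proots_mult) auto
  also have "\<dots> = add_mset a (mset xs)" using Cons proots_linear_factor[of "-a"] by simp
  finally show ?case by simp
qed simp

lemma eigmset: assumes n: "n \<ge> 1" and S: "S \<subseteq> {1..n}"
  shows "eigenvalue_mset (cayley_adj n S) = mset (map (eig n S) [0..<n])"
proof -
  let ?A = "cayley_adj n S" and ?P = "Pm n" and ?Q = "Qm n" and ?B = "Bm n S"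
  have cA: "?A \<in> carrier_mat n n" and cP: "?P \<in> carrier_mat n n" and cQ: "?Q \<in> carrier_mat n n"
    and cB: "?B \<in> carrier_mat n n"
    by (auto simp: cayley_adj_def Pm_def Qm_def Bm_def)
  have PQ: "?P * ?Q = 1\<^sub>m n" by (rule PQ[OF n])
  have QP: "?Q * ?P = 1\<^sub>m n" by (rule mat_mult_left_right_inverse[OF cP cQ PQ])
  have "?A = ?A * (?P * ?Q)" using cA by (simp add: PQ right_mult_one_mat)
  also have "\<dots> = (?A * ?P) * ?Q" using cA cP cQ by simp
  also have "\<dots> = ?P * ?B * ?Q" by (simp add: AP[OF n S])
  finally have AB: "?A = ?P * ?B * ?Q" .
  have sim: "similar_mat ?A ?B"
    by (rule similar_matI[OF _ PQ QP AB]) (use cA cP cQ cB in auto)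
  have ut: "upper_triangular ?B" by (auto simp: upper_triangular_def Bm_def)
  have dm: "diag_mat ?B = map (eig n S) [0..<n]"
    by (auto simp: diag_mat_def Bm_def)
  have "char_poly ?A = (\<Prod>a\<leftarrow>map (eig n S) [0..<n]. [:- a, 1:])"
    using char_poly_similar[OF sim] char_poly_upper_triangular[OF cB ut] dm by simp
  hence "proots (char_poly ?A) = mset (map (eig n S) [0..<n])"
    by (simp only: proots_lin)
  thus ?thesis by (simp add: eigenvalue_mset_def)
qed

lemma w_pow_nk: "n \<ge> 1 \<Longrightarrow> w n ^ (n * k) = 1"
  by (simp add: power_mult w_pow_n)

lemma eig0: "eig n S 0 = of_nat (card S)"
  by (simp add: eig_def)

lemma eig_Re: assumes "finite S" shows "Re (eig n S j) \<le> of_nat (card S)"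
proof -
  have "Re (eig n S j) = (\<Sum>s\<in>S. Re (w n ^ (j * s)))" by (simp add: eig_def Re_sum)
  also have "\<dots> \<le> (\<Sum>s\<in>S. 1)"
    by (intro sum_mono) (metis complex_Re_le_cmod norm_w)
  finally show ?thesis by simp
qed

lemma eig_sym: assumes n: "n \<ge> 1" and S: "S \<subseteq> {1..<n}" and sym: "\<And>s. s \<in> S \<Longrightarrow> n - s \<in> S"
  and j: "j \<le> n"
  shows "eig n S (n - j) = eig n S j"
proof -
  have "eig n S (n - j) = (\<Sum>s\<in>S. w n ^ (j * (n - s)))"
    unfolding eig_def
  proof (intro sum.cong refl)
    fix s assume s: "s \<in> S"
    hence sn: "s \<le> n" using S by auto
    have "w n ^ ((n - j) * s) * w n ^ (j * s) = w n ^ (n * s)"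
      using j by (simp add: power_add[symmetric] add_mult_distrib[symmetric])
    also have "\<dots> = w n ^ (j * (n - s)) * w n ^ (j * s)"
      using sn w_pow_nk[OF n, of s] w_pow_nk[OF n, of j]
      by (simp add: power_add[symmetric] add_mult_distrib2[symmetric] mult.commute)
    finally show "w n ^ ((n - j) * s) = w n ^ (j * (n - s))"
      using mult_right_cancel[OF w_nz[of n "j * s"]] by blast
  qed
  also have "\<dots> = eig n S j"
    unfolding eig_def
    by (rule sum.reindex_bij_witness[where i="\<lambda>s. n - s" and j="\<lambda>s. n - s"])
       (use S sym in auto)
  finally show ?thesis .
qed

lemma w_half: assumes n: "n \<ge> 1" and e: "even n" shows "w n ^ (n div 2) = -1"
proof -
  obtain m where m: "n = 2 * m" using e by blast
  hence md: "n div 2 = m" by simp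
  have m1: "m \<ge> 1" using m n by simp
  have "(w n ^ m) ^ 2 = w n ^ n" unfolding m by (simp only: power_mult[symmetric] mult.commute)
  hence sq: "(w n ^ m) ^ 2 = 1" using w_pow_n[OF n] by simp
  have ne: "w n ^ m \<noteq> 1"
  proof
    assume "w n ^ m = 1"
    hence "n dvd m" using w_pow_eq_1[OF n] by blast
    hence "n \<le> m" using m1 by (intro dvd_imp_le) auto
    thus False using m m1 by simp
  qed
  from sq ne show ?thesis unfolding md by (simp add: power2_eq_1_iff)
qed

lemma eig_half: assumes n: "n \<ge> 1" and e: "even n"
  shows "eig n S (n div 2) = (\<Sum>s\<in>S. (-1) ^ s)"
  unfolding eig_def by (simp add: power_mult w_half[OF n e])

lemma sum_sign: assumes "finite (S :: nat set)"
  shows "(\<Sum>s\<in>S. (-1::complex) ^ s) = of_nat (card {s\<in>S. even s}) - of_nat (card {s\<in>S. odd s})"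
proof -
  have "(\<Sum>s\<in>S. (-1::complex) ^ s) = (\<Sum>s\<in>S. if even s then 1 else -1)"
    by (intro sum.cong) auto
  also have "\<dots> = (\<Sum>s\<in>{s\<in>S. even s}. 1) + (\<Sum>s\<in>{s\<in>S. odd s}. -1)"
    using assms by (simp add: sum.If_cases Collect_conj_eq Int_commute Compl_eq)
  finally show ?thesis by simp
qed

lemma card_split: assumes "finite (S :: nat set)"
  shows "card S = card {s\<in>S. even s} + card {s\<in>S. odd s}"
proof -
  have "S = {s\<in>S. even s} \<union> {s\<in>S. odd s}" by auto
  hence "card S = card ({s\<in>S. even s} \<union> {s\<in>S. odd s})" by simp
  also have "\<dots> = card {s\<in>S. even s} + card {s\<in>S. odd s}"
    using assms by (intro card_Un_disjoint) auto
  finally show ?thesis .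
qed

lemma msplit: fixes f :: "nat \<Rightarrow> 'a" assumes nh: "n = 2*h" and h: "h \<ge> 1"
  and sym: "\<And>j. j \<le> n \<Longrightarrow> f (n - j) = f j"
  shows "mset (map f [0..<n]) = add_mset (f 0) (add_mset (f h) (mset (map f [1..<h]) + mset (map f [1..<h])))"
proof -
  have up: "[0..<n] = [0..<1] @ [1..<h] @ [h..<h+1] @ [h+1..<n]"
  proof -
    have a: "[0..<n] = [0..<h] @ [h..<n]" using nh upt_add_eq_append[of 0 h "n - h"] by (simp add: mult_2)
    have b: "[0..<h] = [0..<1] @ [1..<h]" using h upt_add_eq_append[of 0 1 "h - 1"] by simp
    have c: "[h..<n] = [h..<h+1] @ [h+1..<n]" using nh h upt_add_eq_append[of h "h+1" "n - (h+1)"] by (simp add: mult_2)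
    show ?thesis using a b c by simp
  qed
  have inj: "inj_on (\<lambda>j. n - j) {1..<h}" by (rule inj_onI) (use nh in auto)
  have im: "(\<lambda>j. n - j) ` {1..<h} = {h+1..<n}"
  proof
    show "(\<lambda>j. n - j) ` {1..<h} \<subseteq> {h+1..<n}" using nh by auto
    show "{h+1..<n} \<subseteq> (\<lambda>j. n - j) ` {1..<h}"
    proof
      fix k assume k: "k \<in> {h+1..<n}"
      hence "n - k \<in> {1..<h}" "k = n - (n - k)" using nh by auto
      thus "k \<in> (\<lambda>j. n - j) ` {1..<h}" by blast
    qed
  qed
  have "mset (map f [h+1..<n]) = image_mset f (mset_set {h+1..<n})"
    by (simp add: mset_upt)
  also have "\<dots> = image_mset f (image_mset (\<lambda>j. n - j) (mset_set {1..<h}))"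
    by (subst image_mset_mset_set[OF inj]) (simp only: im)
  also have "\<dots> = image_mset (\<lambda>j. f (n - j)) (mset_set {1..<h})"
    by (simp add: image_mset.compositionality o_def)
  also have "\<dots> = image_mset f (mset_set {1..<h})"
    by (intro image_mset_cong) (use nh sym in auto)
  also have "\<dots> = mset (map f [1..<h])" by (simp add: mset_upt)
  finally have "mset (map f [h+1..<n]) = mset (map f [1..<h])" .
  thus ?thesis unfolding up by simp
qed

lemma par: "add_mset a (add_mset b1 (N1+N1)) = add_mset a (add_mset b2 (N2+N2)) \<Longrightarrow> b1 = b2"
proof (rule ccontr)
  assume e: "add_mset a (add_mset b1 (N1+N1)) = add_mset a (add_mset b2 (N2+N2))" and ne: "b1 \<noteq> b2"
  have "count (add_mset a (add_mset b1 (N1+N1))) b1 = count (add_mset a (add_mset b2 (N2+N2))) b1"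
    using e by simp
  hence "(if a = b1 then 1 else 0) + Suc (count N1 b1 + count N1 b1) = (if a = b1 then 1 else 0) + count N2 b1 + count N2 b1"
    using ne ne[symmetric] by (cases "a = b1") auto
  hence "Suc (count N1 b1 + count N1 b1) = count N2 b1 + count N2 b1" by simp
  thus False by presburger
qed

lemma G_parity: assumes "even n" "s \<in> G n d" shows "even s \<longleftrightarrow> even d"
proof -
  have d: "gcd s n = d" using assms by (simp add: G_def)
  show ?thesis
  proof
    assume "even s" thus "even d" using assms(1) d by (metis gcd_greatest)
  next
    assume "even d" thus "even s" using d by (metis dvd_trans gcd_dvd1)
  qed
qed

lemma card_G: assumes "n \<ge> 1" "d dvd n" shows "card (G n d) = totient (n div d)"
proof -
  have "G n d = {k\<in>{0<..n}. gcd k n = d}" by (auto simp: G_def)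
  thus ?thesis using card_gcd_eq_totient[of n d] assms by simp
qed

lemma card_part: assumes n: "n \<ge> 1" and e: "even n" and D: "D \<subseteq> divisors_of n - {n}"
  and P: "P = even \<or> P = odd"
  shows "card {s \<in> ICG_set n D. P s} = (\<Sum>d\<in>{d\<in>D. P d}. totient (n div d))"
proof -
  have finD: "finite D"
    using D n by (intro finite_subset[of D "{d. d dvd n}"]) (auto simp: divisors_of_def)
  have eq: "{s \<in> ICG_set n D. P s} = (\<Union>d\<in>{d\<in>D. P d}. G n d)"
    using G_parity[OF e] P unfolding ICG_set_def by blast
  have "card (\<Union>d\<in>{d\<in>D. P d}. G n d) = (\<Sum>d\<in>{d\<in>D. P d}. card (G n d))"
    by (intro card_UN_disjoint) (use finD in \<open>auto simp: G_def\<close>)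
  also have "\<dots> = (\<Sum>d\<in>{d\<in>D. P d}. totient (n div d))"
    by (intro sum.cong refl card_G[OF n]) (use D in \<open>auto simp: divisors_of_def\<close>)
  finally show ?thesis using eq by simp
qed

lemma S_props: assumes n: "n \<ge> 1" and D: "D \<subseteq> divisors_of n - {n}"
  shows "ICG_set n D \<subseteq> {1..<n}" "\<And>s. s \<in> ICG_set n D \<Longrightarrow> n - s \<in> ICG_set n D"
proof -
  show "ICG_set n D \<subseteq> {1..<n}"
  proof
    fix s assume "s \<in> ICG_set n D"
    then obtain d where d: "d \<in> D" "s \<in> G n d" by (auto simp: ICG_set_def)
    hence "s \<in> {1..n}" "gcd s n = d" "d \<noteq> n" using D by (auto simp: G_def)
    thus "s \<in> {1..<n}" by (cases "s = n") auto
  qed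
  fix s assume "s \<in> ICG_set n D"
  then obtain d where d: "d \<in> D" "s \<in> G n d" by (auto simp: ICG_set_def)
  hence s: "s \<in> {1..n}" "gcd s n = d" "d \<noteq> n" using D by (auto simp: G_def)
  hence "s < n" by (cases "s = n") auto
  hence "n - s \<in> {1..n}" "gcd (n - s) n = d" using s gcd_diff2_nat[of s n] by auto
  thus "n - s \<in> ICG_set n D" using d by (auto simp: ICG_set_def G_def)
qed

lemma mset_D: assumes n: "n \<ge> 1" and D: "D \<subseteq> divisors_of n - {n}"
  shows "eigenvalue_mset (ICG_adj n D) = mset (map (eig n (ICG_set n D)) [0..<n])"
  unfolding ICG_adj_def using S_props[OF n D] by (intro eigmset[OF n]) auto

theorem corollary2p7:
  fixes n :: nat and D1 D2 :: "nat set"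
  assumes "n \<ge> 1" and "even n"
    and "D1 \<subseteq> divisors_of n - {n}" and "D2 \<subseteq> divisors_of n - {n}"
    and "isospectral (ICG_adj n D1) (ICG_adj n D2)"
  shows "(\<Sum>d\<in>{d\<in>D1. odd d}. totient (n div d)) = (\<Sum>d\<in>{d\<in>D2. odd d}. totient (n div d)) \<and>
         (\<Sum>d\<in>{d\<in>D1. even d}. totient (n div d)) = (\<Sum>d\<in>{d\<in>D2. even d}. totient (n div d))"
proof -
  note n = assms(1) and e = assms(2) and D1 = assms(3) and D2 = assms(4)
  define S1 where "S1 = ICG_set n D1"
  define S2 where "S2 = ICG_set n D2"
  have S1: "S1 \<subseteq> {1..<n}" "\<And>s. s \<in> S1 \<Longrightarrow> n - s \<in> S1" using S_props[OF n D1] S1_def by auto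
  have S2: "S2 \<subseteq> {1..<n}" "\<And>s. s \<in> S2 \<Longrightarrow> n - s \<in> S2" using S_props[OF n D2] S2_def by auto
  have f1: "finite S1" and f2: "finite S2" using S1 S2 finite_subset by blast+
  have M: "mset (map (eig n S1) [0..<n]) = mset (map (eig n S2) [0..<n])"
    using assms(5) mset_D[OF n D1] mset_D[OF n D2] unfolding isospectral_def S1_def S2_def by simp
  have le: "card A \<le> card B" if M: "mset (map (eig n A) [0..<n]) = mset (map (eig n B) [0..<n])"
    and fB: "finite B" for A B
  proof -
    have "eig n A 0 \<in># mset (map (eig n A) [0..<n])" using n by simp
    hence "eig n A 0 \<in># mset (map (eig n B) [0..<n])" by (simp only: M)
    then obtain j where "eig n B j = eig n A 0" by auto
    hence "of_nat (card A) = Re (eig n B j)" by (simp add: eig0)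
    also have "\<dots> \<le> of_nat (card B)" by (rule eig_Re[OF fB])
    finally show ?thesis by simp
  qed
  have cardeq: "card S1 = card S2" using le[OF M f2] le[OF M[symmetric] f1] by simp
  obtain h where h: "n = 2 * h" using e by blast
  have h1: "h \<ge> 1" using h n by simp
  have hd: "n div 2 = h" using h by simp
  have sp1: "mset (map (eig n S1) [0..<n]) = add_mset (eig n S1 0) (add_mset (eig n S1 h)
      (mset (map (eig n S1) [1..<h]) + mset (map (eig n S1) [1..<h])))"
    by (rule msplit[OF h h1], rule eig_sym[OF n S1(1) S1(2)]) auto
  have sp2: "mset (map (eig n S2) [0..<n]) = add_mset (eig n S2 0) (add_mset (eig n S2 h)
      (mset (map (eig n S2) [1..<h]) + mset (map (eig n S2) [1..<h])))"
    by (rule msplit[OF h h1], rule eig_sym[OF n S2(1) S2(2)]) auto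
  have "eig n S1 0 = eig n S2 0" using cardeq by (simp add: eig0)
  hence "eig n S1 h = eig n S2 h" using M sp1 sp2 par by metis
  hence "(\<Sum>s\<in>S1. (-1::complex) ^ s) = (\<Sum>s\<in>S2. (-1) ^ s)"
    using eig_half[OF n e, of S1] eig_half[OF n e, of S2] hd by simp
  hence "complex_of_nat (card {s\<in>S1. even s}) - of_nat (card {s\<in>S1. odd s}) =
         of_nat (card {s\<in>S2. even s}) - of_nat (card {s\<in>S2. odd s})"
    by (simp add: sum_sign[OF f1] sum_sign[OF f2])
  hence "complex_of_int (int (card {s\<in>S1. even s}) - int (card {s\<in>S1. odd s})) =
         complex_of_int (int (card {s\<in>S2. even s}) - int (card {s\<in>S2. odd s}))"
    by simp
  hence diff: "int (card {s\<in>S1. even s}) - int (card {s\<in>S1. odd s}) =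
         int (card {s\<in>S2. even s}) - int (card {s\<in>S2. odd s})"
    by (simp only: of_int_eq_iff)
  have "card {s\<in>S1. even s} + card {s\<in>S1. odd s} = card {s\<in>S2. even s} + card {s\<in>S2. odd s}"
    using cardeq card_split[OF f1] card_split[OF f2] by simp
  with diff have oe: "card {s\<in>S1. odd s} = card {s\<in>S2. odd s}" "card {s\<in>S1. even s} = card {s\<in>S2. even s}"
    by linarith+
  show ?thesis
    using oe card_part[OF n e D1, of odd] card_part[OF n e D2, of odd]
      card_part[OF n e D1, of even] card_part[OF n e D2, of even]
    unfolding S1_def S2_def by simp
qed

end
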